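(* Let $n\ge 1$, let $n_0>0$ and $N_+\in\mathbb{R}^n$ with positive entries, let $M_1>0$, and let $L\in\mathbb{R}^n$ have finite entries. For $A\in\mathbb{R}^n$ set $a_0(A)=M_1-\mathbf{1}^\top A$, $b_0(A)=n_0-a_0(A)$, $B(A)=N_+-A$, and $$G(A)=-L^\top A+f(a_0(A))+\sum_{i=1}^n f(B_i(A))+\sum_{i=1}^n f(A_i)+f(b_0(A)),$$ where $f(x)=x\log x-x$ for $x>0$ and $f(0)=0$. Let $\mathcal{D}=\{A\in\mathbb{R}^n: 0\le A\le N_+ \text{ componentwise},\ a_0(A)\ge 0,\ b_0(A)\ge 0\}$ be the domain of $G$. Suppose that some $A\in\mathbb{R}^n$ satisfies $N_+>A$ componentwise, $M_1>\mathbf{1}^\top A$, and $n_0>a_0(A)$. Then $G$ has a unique global minimizer on $\mathcal{D}$.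
   Context: This is the Greenland–Longnecker pseudo-count problem for log odds ratios: $n$ alternative exposure levels, $n_0$ total subjects at the reference exposure, $N_+$ total subjects at the alternative exposures, $M_1$ total cases, $L$ reported log odds ratios; $A$ are pseudo-cases at alternative exposures, $a_0$ pseudo-cases at the reference exposure, $B$ and $b_0$ the corresponding non-cases. The gradient of $G$ is $g(A)=-L-\log(a_0(A))\mathbf{1}-\log(B(A))+\log(A)+\log(b_0(A))\mathbf{1}$ (componentwise logarithms), whose root the Greenland–Longnecker Newton method seeks. $\mathbf{1}$ denotes the all-ones vector in $\mathbb{R}^n$. *)

theory Defs
  imports "HOL-Analysis.Analysis"
begin

text \<open>f(x) = x log x - x for x > 0, f(0) = 0 (only used on x \<ge> 0).\<close>
definition gl_f :: "real \<Rightarrow> real" where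
  "gl_f x = (if x > 0 then x * ln x - x else 0)"

definition gl_a0 :: "real \<Rightarrow> real ^ 'n \<Rightarrow> real" where
  "gl_a0 M1 A = M1 - (\<Sum>i\<in>UNIV. A $ i)"

definition gl_b0 :: "real \<Rightarrow> real \<Rightarrow> real ^ 'n \<Rightarrow> real" where
  "gl_b0 n0 M1 A = n0 - gl_a0 M1 A"

definition gl_B :: "real ^ 'n \<Rightarrow> real ^ 'n \<Rightarrow> real ^ 'n" where
  "gl_B Np A = Np - A"

definition gl_G :: "real \<Rightarrow> real ^ 'n \<Rightarrow> real \<Rightarrow> real ^ 'n \<Rightarrow> real ^ 'n \<Rightarrow> real" where
  "gl_G n0 Np M1 L A =
     - (L \<bullet> A) + gl_f (gl_a0 M1 A) + (\<Sum>i\<in>UNIV. gl_f (gl_B Np A $ i))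
     + (\<Sum>i\<in>UNIV. gl_f (A $ i)) + gl_f (gl_b0 n0 M1 A)"

definition gl_D :: "real \<Rightarrow> real ^ 'n \<Rightarrow> real \<Rightarrow> (real ^ 'n) set" where
  "gl_D n0 Np M1 = {A. (\<forall>i. 0 \<le> A $ i \<and> A $ i \<le> Np $ i) \<and>
                        gl_a0 M1 A \<ge> 0 \<and> gl_b0 n0 M1 A \<ge> 0}"

end

theory Submission
  imports Defs
begin

lemma glf_deriv: assumes "x > 0" shows "(gl_f has_real_derivative ln x) (at x)"
proof -
  have "((\<lambda>x. x * ln x - x) has_real_derivative (1 * ln x + x * (1/x) - 1)) (at x)"
    using assms by (auto intro!: derivative_eq_intros)
  hence d: "((\<lambda>x. x * ln x - x) has_real_derivative ln x) (at x)" using assms by simp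
  show ?thesis
    apply (rule has_field_derivative_transform_within_open[OF d, of "{0<..}"])
    using assms by (auto simp: gl_f_def)
qed

lemma glf_cont: "continuous_on {0..} gl_f"
proof -
  have "continuous (at x within {0..}) gl_f" if "x \<ge> 0" for x
  proof (cases "x = 0")
    case True
    have l0: "((\<lambda>x::real. ln (inverse x) / inverse x) \<longlongrightarrow> 0) (at_right 0)"
      using filterlim_at_top_to_right[THEN iffD1, OF ln_x_over_x_tendsto_0] by simp
    have l: "((\<lambda>x::real. - (ln (inverse x) / inverse x) - x) \<longlongrightarrow> 0) (at_right 0)"
      using tendsto_diff[OF tendsto_minus[OF l0] tendsto_ident_at[of "0::real" "{0<..}"]] by simp
    have ev: "\<forall>\<^sub>F x in at_right 0. - (ln (inverse x) / inverse x) - x = gl_f x"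
      using eventually_at_right_less[of "0::real"]
      by eventually_elim (simp add: gl_f_def ln_inverse divide_inverse)
    have "(gl_f \<longlongrightarrow> 0) (at_right 0)"
      by (rule Lim_transform_eventually[OF l ev])
    then show ?thesis using True
      by (simp add: continuous_within at_within_Ici_at_right gl_f_def)
  next
    case False
    then have "x > 0" using that by simp
    then have "isCont gl_f x" by (rule DERIV_isCont[OF glf_deriv])
    then show ?thesis by (rule continuous_at_imp_continuous_at_within)
  qed
  then show ?thesis by (simp add: continuous_on_eq_continuous_within)
qed

lemma glf_mid: assumes "0 \<le> x" "x < y"
  shows "2 * gl_f ((x+y)/2) < gl_f x + gl_f y"
proof -
  define m where "m = (x+y)/2"
  have xm: "x < m" "m < y" using assms by (auto simp: m_def)
  have c: "continuous_on {a..b} gl_f" if "0 \<le> a" for a b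
    using continuous_on_subset[OF glf_cont] that by auto
  have d: "gl_f differentiable (at z)" if "z > 0" for z
    using glf_deriv[OF that] real_differentiable_def by blast
  have d1: "gl_f differentiable (at z)" if "x < z" "z < m" for z
    using d that assms by simp
  have d2: "gl_f differentiable (at z)" if "m < z" "z < y" for z
    using d that assms xm by simp
  have m0: "0 \<le> m" using assms xm by simp
  obtain l1 z1 where 1: "x < z1" "z1 < m" "DERIV gl_f z1 :> l1" "gl_f m - gl_f x = (m - x) * l1"
    using MVT[OF xm(1) c[OF assms(1)] d1] by blast
  obtain l2 z2 where 2: "m < z2" "z2 < y" "DERIV gl_f z2 :> l2" "gl_f y - gl_f m = (y - m) * l2"
    using MVT[OF xm(2) c[OF m0] d2] by blast
  have z1: "0 < z1" using 1 assms by simp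
  have z2: "0 < z2" using 2 xm assms by simp
  have e1: "l1 = ln z1" by (rule DERIV_unique[OF 1(3) glf_deriv[OF z1]])
  have e2: "l2 = ln z2" by (rule DERIV_unique[OF 2(3) glf_deriv[OF z2]])
  have lt: "ln z1 < ln z2" using 1 2 z1 by simp
  have ym: "y - m = m - x" by (simp add: m_def field_simps)
  have "(m - x) * ln z1 < (m - x) * ln z2"
    by (rule mult_strict_left_mono[OF lt]) (use xm in simp)
  then have "gl_f m - gl_f x < gl_f y - gl_f m" using 1(4) 2(4) e1 e2 ym by simp
  then show ?thesis by (simp add: m_def[symmetric])
qed

lemma glf_mid_le: assumes "0 \<le> x" "0 \<le> y"
  shows "2 * gl_f ((x+y)/2) \<le> gl_f x + gl_f y"
proof -
  consider "x < y" | "x = y" | "y < x" by linarith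
  then show ?thesis
  proof cases
    case 1 then show ?thesis using glf_mid[OF assms(1)] by fastforce
  next
    case 2 then show ?thesis by simp
  next
    case 3 then show ?thesis using glf_mid[OF assms(2), of x] by (simp add: add.commute)
  qed
qed


lemma D_alt: "gl_D n0 Np M1 = cbox 0 Np \<inter> {A. (\<Sum>i\<in>UNIV. A $ i) \<le> M1} \<inter> {A. M1 - n0 \<le> (\<Sum>i\<in>UNIV. A $ i)}"
  by (auto simp: gl_D_def gl_a0_def gl_b0_def mem_box_cart)

lemma D_compact: "compact (gl_D n0 Np M1)"
proof -
  have c: "continuous_on UNIV (\<lambda>A::real^'n. \<Sum>i\<in>UNIV. A $ i)"
    by (intro continuous_intros)
  have "closed ({A::real^'n. (\<Sum>i\<in>UNIV. A $ i) \<le> M1} \<inter> {A. M1 - n0 \<le> (\<Sum>i\<in>UNIV. A $ i)})"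
    by (intro closed_Int closed_Collect_le continuous_intros)
  then show ?thesis unfolding D_alt Int_assoc by (intro compact_Int_closed) auto
qed

lemma G_cont: "continuous_on (gl_D n0 Np M1) (gl_G n0 Np M1 L)"
proof -
  let ?D = "gl_D n0 Np M1"
  have ca: "continuous_on ?D (\<lambda>A. gl_f (gl_a0 M1 A))"
    by (rule continuous_on_compose2[OF glf_cont]) (auto simp: gl_a0_def gl_D_def intro!: continuous_intros)
  have cb: "continuous_on ?D (\<lambda>A. gl_f (gl_b0 n0 M1 A))"
    by (rule continuous_on_compose2[OF glf_cont]) (auto simp: gl_a0_def gl_b0_def gl_D_def intro!: continuous_intros)
  have cB: "continuous_on ?D (\<lambda>A. gl_f (gl_B Np A $ i))" for i
    by (rule continuous_on_compose2[OF glf_cont]) (auto simp: gl_B_def gl_D_def intro!: continuous_intros)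
  have cA: "continuous_on ?D (\<lambda>A. gl_f (A $ i))" for i
    by (rule continuous_on_compose2[OF glf_cont]) (auto simp: gl_D_def intro!: continuous_intros)
  show ?thesis unfolding gl_G_def
    by (intro continuous_intros ca cb cB cA)
qed

lemma D_nonempty:
  assumes "n0 > 0" and "\<forall>i. Np $ i > 0" and "M1 > 0"
    and "\<exists>A :: real ^ 'n. (\<forall>i. Np $ i > A $ i) \<and> M1 > (\<Sum>i\<in>UNIV. A $ i)
                          \<and> n0 > gl_a0 M1 A"
  shows "gl_D n0 Np M1 \<noteq> {}"
proof -
  obtain A0 :: "real^'n" where A0: "\<forall>i. Np $ i > A0 $ i" "n0 > gl_a0 M1 A0" using assms(4) by blast
  define S where "S = (\<Sum>i\<in>UNIV. Np $ i)"
  have "(\<Sum>i\<in>UNIV. A0 $ i) < S" unfolding S_def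
    by (rule sum_strict_mono) (use A0 in auto)
  hence lt: "M1 - n0 < S" using A0 by (simp add: gl_a0_def)
  have Spos: "S > 0" unfolding S_def using assms(2)
    by (simp add: sum_pos)
  define c where "c = max 0 (M1 - n0)"
  have c: "0 \<le> c" "c \<le> S" "c \<le> M1" "M1 - n0 \<le> c" using lt Spos assms by (auto simp: c_def)
  define A where "A = (c / S) *\<^sub>R Np"
  have "(\<Sum>i\<in>UNIV. A $ i) = c * (\<Sum>i\<in>UNIV. Np $ i) / S" unfolding A_def
    by (simp add: sum_distrib_left sum_divide_distrib)
  hence sA: "(\<Sum>i\<in>UNIV. A $ i) = c" using Spos by (simp add: S_def[symmetric])
  have "A $ i \<le> Np $ i" "0 \<le> A $ i" for i
  proof -
    have "c / S \<le> 1" using c Spos by simp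
    then have "c / S * Np $ i \<le> 1 * Np $ i" using assms(2) by (intro mult_right_mono) (auto simp: less_imp_le)
    then show "A $ i \<le> Np $ i" unfolding A_def by simp
    show "0 \<le> A $ i" unfolding A_def using c Spos assms(2) by (simp add: less_imp_le)
  qed
  then have "A \<in> gl_D n0 Np M1" using sA c by (simp add: gl_D_def gl_a0_def gl_b0_def)
  then show ?thesis by blast
qed

lemma G_mid:
  assumes A: "A \<in> gl_D n0 Np M1" and A': "A' \<in> gl_D n0 Np M1" and ne: "A \<noteq> A'"
  shows "2 * gl_G n0 Np M1 L ((1/2) *\<^sub>R (A + A')) < gl_G n0 Np M1 L A + gl_G n0 Np M1 L A'"
proof -
  define C where "C = (1/2) *\<^sub>R (A + A')"
  have sC: "(\<Sum>i\<in>UNIV. C $ i) = ((\<Sum>i\<in>UNIV. A $ i) + (\<Sum>i\<in>UNIV. A' $ i)) / 2"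
    unfolding C_def by (simp add: sum.distrib sum_divide_distrib[symmetric])
  have a0: "gl_a0 M1 C = (gl_a0 M1 A + gl_a0 M1 A') / 2" using sC by (simp add: gl_a0_def field_simps)
  have b0: "gl_b0 n0 M1 C = (gl_b0 n0 M1 A + gl_b0 n0 M1 A') / 2" using a0 by (simp add: gl_b0_def field_simps)
  have lin: "2 * (L \<bullet> C) = L \<bullet> A + L \<bullet> A'" unfolding C_def by (simp add: inner_add_right)
  have t1: "2 * gl_f (gl_a0 M1 C) \<le> gl_f (gl_a0 M1 A) + gl_f (gl_a0 M1 A')"
    unfolding a0 by (rule glf_mid_le) (use A A' in \<open>auto simp: gl_D_def\<close>)
  have t2: "2 * gl_f (gl_b0 n0 M1 C) \<le> gl_f (gl_b0 n0 M1 A) + gl_f (gl_b0 n0 M1 A')"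
    unfolding b0 by (rule glf_mid_le) (use A A' in \<open>auto simp: gl_D_def\<close>)
  have t3: "2 * (\<Sum>i\<in>UNIV. gl_f (gl_B Np C $ i)) \<le> (\<Sum>i\<in>UNIV. gl_f (gl_B Np A $ i)) + (\<Sum>i\<in>UNIV. gl_f (gl_B Np A' $ i))"
  proof -
    have "2 * gl_f (gl_B Np C $ i) \<le> gl_f (gl_B Np A $ i) + gl_f (gl_B Np A' $ i)" for i
    proof -
      have "gl_B Np C $ i = (gl_B Np A $ i + gl_B Np A' $ i) / 2" by (simp add: C_def gl_B_def field_simps)
      moreover have "0 \<le> gl_B Np A $ i" "0 \<le> gl_B Np A' $ i" using A A' by (auto simp: gl_D_def gl_B_def)
      ultimately show ?thesis using glf_mid_le[of "gl_B Np A $ i" "gl_B Np A' $ i"] by metis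
    qed
    then show ?thesis by (simp add: sum_distrib_left sum.distrib[symmetric] sum_mono)
  qed
  obtain j where j: "A $ j \<noteq> A' $ j" using ne by (metis vec_eq_iff)
  have t4: "2 * (\<Sum>i\<in>UNIV. gl_f (C $ i)) < (\<Sum>i\<in>UNIV. gl_f (A $ i)) + (\<Sum>i\<in>UNIV. gl_f (A' $ i))"
  proof -
    have le: "2 * gl_f (C $ i) \<le> gl_f (A $ i) + gl_f (A' $ i)" for i
      unfolding C_def by simp (rule glf_mid_le, use A A' in \<open>auto simp: gl_D_def\<close>)
    have "2 * gl_f (C $ j) < gl_f (A $ j) + gl_f (A' $ j)"
    proof (cases "A $ j < A' $ j")
      case True then show ?thesis unfolding C_def using glf_mid[OF _ True] A by (simp add: gl_D_def)
    next
      case False then have lt: "A' $ j < A $ j" using j by simp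
      then show ?thesis unfolding C_def using glf_mid[OF _ lt] A' by (simp add: gl_D_def add.commute)
    qed
    then have "(\<Sum>i\<in>UNIV. 2 * gl_f (C $ i)) < (\<Sum>i\<in>UNIV. gl_f (A $ i) + gl_f (A' $ i))"
      by (intro sum_strict_mono_ex1) (use le in auto)
    then show ?thesis by (simp add: sum_distrib_left sum.distrib)
  qed
  show ?thesis unfolding C_def[symmetric] gl_G_def distrib_left mult_minus_right using lin t1 t2 t3 t4 by linarith
qed

theorem theorem1:
  fixes n0 M1 :: real and Np L :: "real ^ 'n"
  assumes "n0 > 0" and "\<forall>i. Np $ i > 0" and "M1 > 0"
    and "\<exists>A :: real ^ 'n. (\<forall>i. Np $ i > A $ i) \<and> M1 > (\<Sum>i\<in>UNIV. A $ i)
                          \<and> n0 > gl_a0 M1 A"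
  shows "\<exists>!A. A \<in> gl_D n0 Np M1 \<and>
              (\<forall>A'\<in>gl_D n0 Np M1. gl_G n0 Np M1 L A \<le> gl_G n0 Np M1 L A')"
proof -
  let ?D = "gl_D n0 Np M1" and ?G = "gl_G n0 Np M1 L"
  obtain A where A: "A \<in> ?D" "\<forall>A'\<in>?D. ?G A \<le> ?G A'"
    using continuous_attains_inf[OF D_compact D_nonempty[OF assms] G_cont] by blast
  have "B = A" if B: "B \<in> ?D" "\<forall>A'\<in>?D. ?G B \<le> ?G A'" for B
  proof (rule ccontr)
    assume ne: "B \<noteq> A"
    have s: "(\<Sum>i\<in>UNIV. ((1/2) *\<^sub>R (B + A)) $ i) = ((\<Sum>i\<in>UNIV. B $ i) + (\<Sum>i\<in>UNIV. A $ i)) / 2"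
      by (simp add: sum.distrib sum_divide_distrib[symmetric])
    have "\<forall>i. 0 \<le> ((1/2) *\<^sub>R (B + A)) $ i \<and> ((1/2) *\<^sub>R (B + A)) $ i \<le> Np $ i"
    proof
      fix i
      have "0 \<le> A $ i" "A $ i \<le> Np $ i" "0 \<le> B $ i" "B $ i \<le> Np $ i"
        using A(1) B(1) by (auto simp: gl_D_def)
      then show "0 \<le> ((1/2) *\<^sub>R (B + A)) $ i \<and> ((1/2) *\<^sub>R (B + A)) $ i \<le> Np $ i" by simp
    qed
    then have "(1/2) *\<^sub>R (B + A) \<in> ?D" using A(1) B(1) s
      by (auto simp: gl_D_def gl_a0_def gl_b0_def)
    then have "?G A \<le> ?G ((1/2) *\<^sub>R (B + A))" "?G B \<le> ?G ((1/2) *\<^sub>R (B + A))" using A B by auto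
    then show False using G_mid[OF B(1) A(1) ne, of L] by linarith
  qed
  then show ?thesis using A by blast
qed

end
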